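(* Let $f:\mathbb{R}^d\to\mathbb{R}$ be twice differentiable and strictly pseudoconvex, with (unique) global minimizer $x_*$. Define \[ g(x)\coloneqq f(x_* )+\int_0^1\frac{\langle\nabla f(x_*+t(x-x_* )),\,x-x_*\rangle}{t}\,dt . \] Then $g$ is well defined and star-convex, i.e. for all $x\in\mathbb{R}^d$ and $\lambda\in[0,1]$, \[ g\bigl(x_*+\lambda(x-x_* )\bigr)\le(1-\lambda)\,g(x_* )+\lambda\,g(x). \]
   Context: $f$ is strictly pseudoconvex if for all $x\neq y$, $f(y)\le f(x)\Rightarrow\langle\nabla f(x),y-x\rangle<0$. *)

theory Defs
  imports "HOL-Analysis.Analysis"
begin

text \<open>Strict pseudoconvexity w.r.t. a gradient map grad
  (GDERIV f x :> grad x for all x).\<close>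
definition strictly_pseudoconvex :: "('a::real_inner \<Rightarrow> real) \<Rightarrow> ('a \<Rightarrow> 'a) \<Rightarrow> bool" where
  "strictly_pseudoconvex f grad \<longleftrightarrow>
     (\<forall>x y. x \<noteq> y \<longrightarrow> f y \<le> f x \<longrightarrow> grad x \<bullet> (y - x) < 0)"

definition g_integrand :: "('a::real_inner \<Rightarrow> 'a) \<Rightarrow> 'a \<Rightarrow> 'a \<Rightarrow> real \<Rightarrow> real" where
  "g_integrand grad xs x t = (grad (xs + t *\<^sub>R (x - xs)) \<bullet> (x - xs)) / t"

definition g_fun :: "('a::euclidean_space \<Rightarrow> real) \<Rightarrow> ('a \<Rightarrow> 'a) \<Rightarrow> 'a \<Rightarrow> 'a \<Rightarrow> real" where
  "g_fun f grad xs x = f xs + integral {0..1} (g_integrand grad xs x)"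

end

theory Submission
  imports Defs
begin

theorem theorem4:
  fixes f :: "'a::euclidean_space \<Rightarrow> real" and grad :: "'a \<Rightarrow> 'a" and xs :: 'a
  assumes grad: "\<And>x. GDERIV f x :> grad x"
    and twice: "\<And>x. grad differentiable (at x)"
    and spc: "strictly_pseudoconvex f grad"
    and minimizer: "\<And>x. f xs \<le> f x"
  shows "(\<forall>x. g_integrand grad xs x integrable_on {0..1}) \<and>
         (\<forall>x. \<forall>l::real. 0 \<le> l \<and> l \<le> 1 \<longrightarrow>
            g_fun f grad xs (xs + l *\<^sub>R (x - xs))
              \<le> (1 - l) * g_fun f grad xs xs + l * g_fun f grad xs x)"
proof -
  have g0: "grad xs = 0"
  proof -
    have "(\<lambda>h. h \<bullet> grad xs) = (\<lambda>h. 0)"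
      using has_derivative_local_min[OF grad[of xs, unfolded gderiv_def]] minimizer
      by simp
    then have "grad xs \<bullet> grad xs = 0" by meson
    then show ?thesis by simp
  qed
  have key: "\<exists>kc. continuous_on UNIV kc \<and> (\<forall>t. t \<noteq> 0 \<longrightarrow> kc t = g_integrand grad xs x t)
      \<and> (\<forall>t>0. kc t \<ge> 0)" for x
  proof -
    define v where "v = x - xs"
    define h where "h t = grad (xs + t *\<^sub>R v) \<bullet> v" for t
    have hd: "h differentiable (at t)" for t
    proof -
      have lin: "(\<lambda>t. xs + t *\<^sub>R v) differentiable (at t)" by (intro derivative_intros)
      then have "(\<lambda>t. grad (xs + t *\<^sub>R v)) differentiable (at t)"
        using differentiable_chain_at[OF lin twice] by (simp add: o_def)
      then show ?thesis unfolding h_def by (intro differentiable_inner) auto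
    qed
    then obtain D where D: "(h has_real_derivative D) (at 0)"
      using hd[of 0] unfolding real_differentiable_def by blast
    have h0: "h 0 = 0" using g0 by (simp add: h_def)
    define kc where "kc t = (if t = 0 then D else h t / t)" for t
    have hc: "isCont h t" for t using hd differentiable_imp_continuous_within by blast
    have "isCont kc t" for t
    proof (cases "t = 0")
      case True
      have "((\<lambda>s. h s / s) \<longlongrightarrow> D) (at 0)"
        using D h0 unfolding DERIV_def by simp
      then have "(kc \<longlongrightarrow> D) (at 0)"
        by (rule Lim_transform_eventually) (auto simp: kc_def eventually_at_filter)
      then show ?thesis using True by (simp add: isCont_def kc_def)
    next
      case False
      have "isCont (\<lambda>s. h s / s) t" using hc False by (intro continuous_intros) auto
      moreover have "\<forall>\<^sub>F s in nhds t. h s / s = kc s"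
      proof -
        have "\<forall>\<^sub>F s in nhds t. s \<noteq> 0"
          using eventually_nhds_in_open[of "-{0}" t] False by auto
        then show ?thesis by (rule eventually_mono) (simp add: kc_def)
      qed
      ultimately show ?thesis using isCont_cong[of "\<lambda>s. h s / s" kc t] by simp
    qed
    then have "continuous_on UNIV kc" by (simp add: continuous_at_imp_continuous_on)
    moreover have "kc t = g_integrand grad xs x t" if "t \<noteq> 0" for t
      using that by (simp add: kc_def h_def g_integrand_def v_def)
    moreover have "kc t \<ge> 0" if "t > 0" for t
    proof (cases "v = 0")
      case True then show ?thesis using that by (simp add: kc_def h_def)
    next
      case False
      have "xs + t *\<^sub>R v \<noteq> xs" using False that by simp
      then have "grad (xs + t *\<^sub>R v) \<bullet> (xs - (xs + t *\<^sub>R v)) < 0"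
        using spc minimizer unfolding strictly_pseudoconvex_def by metis
      then have "t * h t > 0" by (simp add: h_def inner_diff_right)
      then show ?thesis using that by (simp add: kc_def zero_less_mult_iff)
    qed
    ultimately show ?thesis by blast
  qed
  have int1: "g_integrand grad xs x integrable_on {0..1}"
    and gx: "g_fun f grad xs x = f xs + integral {0..1} kc"
    if kc: "continuous_on UNIV kc" "\<forall>t. t \<noteq> 0 \<longrightarrow> kc t = g_integrand grad xs x t" for x kc
  proof -
    have ki: "kc integrable_on {0..1}"
      using kc(1) by (intro integrable_continuous_real) (auto intro: continuous_on_subset)
    show "g_integrand grad xs x integrable_on {0..1}"
      by (rule integrable_spike_finite[of "{0}", OF _ _ ki]) (use kc(2) in auto)
    have "integral {0..1} (g_integrand grad xs x) = integral {0..1} kc"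
      by (rule integral_spike[of "{0}"]) (use kc(2) in auto)
    then show "g_fun f grad xs x = f xs + integral {0..1} kc" by (simp add: g_fun_def)
  qed
  have "g_integrand grad xs xs = (\<lambda>t. 0)" by (simp add: g_integrand_def fun_eq_iff)
  then have gxs: "g_fun f grad xs xs = f xs" by (simp add: g_fun_def)
  show ?thesis
  proof (intro conjI allI impI)
    fix x
    obtain kc where kc: "continuous_on UNIV kc" "\<forall>t. t \<noteq> 0 \<longrightarrow> kc t = g_integrand grad xs x t"
      using key[of x] by blast
    show "g_integrand grad xs x integrable_on {0..1}" using int1[OF kc] .
  next
    fix x and l :: real
    assume l: "0 \<le> l \<and> l \<le> 1"
    show "g_fun f grad xs (xs + l *\<^sub>R (x - xs))
              \<le> (1 - l) * g_fun f grad xs xs + l * g_fun f grad xs x"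
    proof (cases "l = 0")
      case True then show ?thesis by (simp add: gxs)
    next
      case False
      with l have lp: "l > 0" by simp
      obtain kc where kc: "continuous_on UNIV kc" "\<forall>t. t \<noteq> 0 \<longrightarrow> kc t = g_integrand grad xs x t"
        "\<forall>t>0. kc t \<ge> 0"
        using key[of x] by blast
      have ki: "kc integrable_on {0..1}"
        using kc(1) by (intro integrable_continuous_real) (auto intro: continuous_on_subset)
      have e1: "integral {0..1} (g_integrand grad xs (xs + l *\<^sub>R (x - xs)))
          = integral {0..1} (\<lambda>t. l^2 * kc (l * t))"
      proof (rule integral_spike[of "{0}"])
        fix t :: real assume t: "t \<in> {0..1} - {0}"
        then have "t \<noteq> 0" "l * t \<noteq> 0" using lp by auto
        define A where "A = grad (xs + (l * t) *\<^sub>R (x - xs)) \<bullet> (x - xs)"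
        have k1: "kc (l * t) = A / (l * t)"
          using kc(2) \<open>l * t \<noteq> 0\<close> by (simp add: g_integrand_def A_def)
        have k2: "g_integrand grad xs (xs + l *\<^sub>R (x - xs)) t = l * A / t"
          by (simp add: g_integrand_def A_def mult.commute)
        show "l^2 * kc (l * t) = g_integrand grad xs (xs + l *\<^sub>R (x - xs)) t"
          unfolding k1 k2 using lp \<open>t \<noteq> 0\<close> by (simp add: power2_eq_square field_simps)
      qed auto
      have img: "(\<lambda>t. t / l) ` {0..l} = {0..1}"
      proof
        show "(\<lambda>t. t / l) ` {0..l} \<subseteq> {0..1}" using lp by auto
        show "{0..1} \<subseteq> (\<lambda>t. t / l) ` {0..l}"
        proof
          fix u :: real assume "u \<in> {0..1}"
          then have "l * u \<in> {0..l}" "u = (l * u) / l" using lp l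
            by (auto simp: mult_le_cancel_left1)
          then show "u \<in> (\<lambda>t. t / l) ` {0..l}" by blast
        qed
      qed
      have e2: "integral {0..1} (\<lambda>t. kc (l * t)) = (1 / l) * integral {0..l} kc"
        using integral_stretch_real[where m=l and f=kc and a=0 and b=l] lp img by simp
      have gy: "g_fun f grad xs (xs + l *\<^sub>R (x - xs)) = f xs + l * integral {0..l} kc"
        using e1 e2 lp by (simp add: g_fun_def power2_eq_square)
      have comb: "integral {0..l} kc + integral {l..1} kc = integral {0..1} kc"
        using Henstock_Kurzweil_Integration.integral_combine[OF _ _ ki, of l] l by simp
      have "integral {l..1} kc \<ge> 0"
      proof (rule integral_nonneg)
        show "kc integrable_on {l..1}"
          using kc(1) by (intro integrable_continuous_real) (auto intro: continuous_on_subset)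
        show "\<And>t. t \<in> {l..1} \<Longrightarrow> 0 \<le> kc t" using kc(3) lp by auto
      qed
      then have "integral {0..l} kc \<le> integral {0..1} kc" using comb by linarith
      then have "l * integral {0..l} kc \<le> l * integral {0..1} kc"
        using lp by (simp add: mult_left_mono)
      then show ?thesis using gy gx[OF kc(1,2)] gxs by (simp add: algebra_simps)
    qed
  qed
qed

end
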